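(* For any $j,j'\in\mathsf{R}'$, $j\ne j'$ implies $\mathrm{efull}(j)\ne\mathrm{efull}(j')$.
   Context: $T\in[0\mathinner{.\,.}\sigma)^n$ with $2\le\sigma<n^{1/7}$; $\tau=\lfloor\mu\log_\sigma n\rfloor$ for a fixed positive constant $\mu<1/6$ with $\tau\ge1$. $\mathrm{per}(S)$ is the shortest period of $S$. $\mathsf{R}=\{i\in[1\mathinner{.\,.}n-3\tau+2]:\mathrm{per}(T[i\mathinner{.\,.}i+3\tau-2])\le\tau/3\}$ and $\mathsf{R}'=\{j\in\mathsf{R}:j-1\notin\mathsf{R}\}$. For $j\in\mathsf{R}$: $\mathrm{end}(j)=\min\{j'\ge j:j'\notin\mathsf{R}\}+3\tau-2$; with $p=\mathrm{per}(T[j\mathinner{.\,.}j+3\tau-1))$, $\mathrm{Lroot}(j)=\min\{T[j+t\mathinner{.\,.}j+t+p):t\in[0\mathinner{.\,.}p)\}$ (lexicographic minimum); with $H=\mathrm{Lroot}(j)$, $T[j\mathinner{.\,.}\mathrm{end}(j))$ is uniquely written as $H'H^kH''$ with $H'$ a proper suffix and $H''$ a proper prefix of $H$, $\mathrm{Ltail}(j)=|H''|$, and $\mathrm{efull}(j)=\mathrm{end}(j)-\mathrm{Ltail}(j)$. *)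

theory Defs
  imports Complex_Main "HOL-Library.Sublist" "HOL-Library.List_Lexorder"
begin

text \<open>Strings are lists of naturals; positions are 1-based as in the paper.
  sub T i k is the fragment T[i..k), i.e. positions i,...,k-1.\<close>
definition sub :: "nat list \<Rightarrow> nat \<Rightarrow> nat \<Rightarrow> nat list" where
  "sub T i k = take (k - i) (drop (i - 1) T)"

definition per :: "nat list \<Rightarrow> nat" where
  "per S = (LEAST p. 0 < p \<and> (\<forall>i. i + p < length S \<longrightarrow> S ! i = S ! (i + p)))"

definition RR :: "nat list \<Rightarrow> nat \<Rightarrow> nat set" where
  "RR T \<tau> = {i. 1 \<le> i \<and> i + 3 * \<tau> \<le> length T + 2 \<and>
                  3 * per (sub T i (i + 3 * \<tau> - 1)) \<le> \<tau>}"

definition RR' :: "nat list \<Rightarrow> nat \<Rightarrow> nat set" where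
  "RR' T \<tau> = {j \<in> RR T \<tau>. j - 1 \<notin> RR T \<tau>}"

definition rend :: "nat list \<Rightarrow> nat \<Rightarrow> nat \<Rightarrow> nat" where
  "rend T \<tau> j = (LEAST j'. j \<le> j' \<and> j' \<notin> RR T \<tau>) + 3 * \<tau> - 2"

text \<open>Lyndon root: lexicographically minimal rotation (all candidates have length p).\<close>
definition Lroot :: "nat list \<Rightarrow> nat \<Rightarrow> nat \<Rightarrow> nat list" where
  "Lroot T \<tau> j = (let p = per (sub T j (j + 3 * \<tau> - 1)) in
      Min {sub T (j + t) (j + t + p) | t. t < p})"

definition Ltail :: "nat list \<Rightarrow> nat \<Rightarrow> nat \<Rightarrow> nat" where
  "Ltail T \<tau> j = (let H = Lroot T \<tau> j in
      THE l. \<exists>H' k H''. sub T j (rend T \<tau> j) = H' @ concat (replicate k H) @ H''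
               \<and> strict_suffix H' H \<and> strict_prefix H'' H \<and> length H'' = l)"

definition efull :: "nat list \<Rightarrow> nat \<Rightarrow> nat \<Rightarrow> nat" where
  "efull T \<tau> j = rend T \<tau> j - Ltail T \<tau> j"

end

theory Submission
  imports Defs
begin

definition pd :: "nat list \<Rightarrow> nat \<Rightarrow> nat \<Rightarrow> nat \<Rightarrow> bool" where
  "pd T a b q \<longleftrightarrow> (\<forall>x. a \<le> x \<longrightarrow> x + q < b \<longrightarrow> T ! x = T ! (x + q))"

abbreviation lper :: "nat list \<Rightarrow> nat \<Rightarrow> bool" where
  "lper S q \<equiv> pd S 0 (length S) q"

lemma per_props: "0 < per S \<and> lper S (per S)"
proof -
  have "0 < per S \<and> (\<forall>i. i + per S < length S \<longrightarrow> S ! i = S ! (i + per S))"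
    unfolding per_def by (rule LeastI[of _ "max 1 (length S)"]) auto
  then show ?thesis unfolding pd_def by auto
qed

lemma per_min: "0 < q \<Longrightarrow> lper S q \<Longrightarrow> per S \<le> q"
  unfolding per_def pd_def by (rule Least_le) auto

lemma lper_sub:
  assumes "b \<le> length T" "a \<le> b"
  shows "lper (take (b - a) (drop a T)) q \<longleftrightarrow> pd T a b q"
proof
  assume h: "lper (take (b - a) (drop a T)) q"
  show "pd T a b q" unfolding pd_def
  proof (intro allI impI)
    fix x assume "a \<le> x" "x + q < b"
    then show "T ! x = T ! (x + q)"
      using h assms unfolding pd_def
      by (auto dest!: spec[of _ "x - a"] simp: add.commute add.left_commute)
  qed
next
  assume h: "pd T a b q"
  show "lper (take (b - a) (drop a T)) q" unfolding pd_def
  proof (intro allI impI)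
    fix i assume "0 \<le> i" "i + q < length (take (b - a) (drop a T))"
    then show "take (b - a) (drop a T) ! i = take (b - a) (drop a T) ! (i + q)"
      using h assms unfolding pd_def
      by (auto dest!: spec[of _ "a + i"] simp: add.commute add.left_commute)
  qed
qed

lemma pd_mono: "pd T a b q \<Longrightarrow> a \<le> a' \<Longrightarrow> b' \<le> b \<Longrightarrow> pd T a' b' q"
  unfolding pd_def by auto

lemma pd_mult: "pd T a b q \<Longrightarrow> a \<le> x \<Longrightarrow> x + c * q < b \<Longrightarrow> T ! x = T ! (x + c * q)"
proof (induction c)
  case 0 then show ?case by simp
next
  case (Suc c)
  then have "T ! x = T ! (x + c * q)" by simp
  also have "\<dots> = T ! (x + c * q + q)" using Suc.prems unfolding pd_def by auto
  moreover have "x + Suc c * q = x + c * q + q" by simp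
  ultimately show ?case by metis
qed

lemma pd_cong:
  assumes "pd T a b q" "a \<le> x" "a \<le> y" "x < b" "y < b" "x mod q = y mod q"
  shows "T ! x = T ! y"
proof -
  have main: "T ! u = T ! v" if "a \<le> u" "u \<le> v" "v < b" "u mod q = v mod q" for u v
  proof -
    have "q dvd (v - u)" using that mod_eq_dvd_iff_nat[of u v q] by simp
    then obtain c where c: "v - u = q * c" by blast
    then have "v = u + c * q" using that by (simp add: mult.commute)
    then show ?thesis using pd_mult[OF assms(1) that(1)] that by simp
  qed
  show ?thesis
  proof (cases "x \<le> y")
    case True then show ?thesis using main assms by blast
  next
    case False then show ?thesis using main[of y x] assms by simp
  qed
qed

lemma pd_ext_right:
  assumes "pd T a b p" "pd T s (b + 1) q" "a \<le> s" "s + p + q \<le> b" "0 < q"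
  shows "pd T a (b + 1) p"
  unfolding pd_def
proof (intro allI impI)
  fix x assume x: "a \<le> x" "x + p < b + 1"
  show "T ! x = T ! (x + p)"
  proof (cases "x + p < b")
    case True then show ?thesis using assms(1) x unfolding pd_def by auto
  next
    case False
    then have xb: "x + p = b" using x by simp
    have 1: "T ! (b - q) = T ! b"
      using assms(2) assms(3-5) spec[OF assms(2)[unfolded pd_def], of "b - q"] by auto
    have 2: "T ! (b - q - p) = T ! (b - q)"
      using spec[OF assms(1)[unfolded pd_def], of "b - q - p"] assms(3-5) by auto
    have 3: "T ! (b - p - q) = T ! (b - p)"
      using spec[OF assms(2)[unfolded pd_def], of "b - p - q"] assms(3-5) by auto
    have "b - q - p = b - p - q" by simp
    then show ?thesis using 1 2 3 xb by (metis add_diff_cancel_right')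
  qed
qed

lemma concat_rep:
  assumes "lper X p" "k * p \<le> length X"
  shows "concat (replicate k (take p X)) = take (k * p) X"
  using assms(2)
proof (induction k)
  case 0 then show ?case by simp
next
  case (Suc k)
  have "take (Suc k * p) X = take (k * p) X @ take p (drop (k * p) X)"
  proof -
    have "Suc k * p = k * p + p" by simp
    then show ?thesis by (simp only: take_add)
  qed
  also have "take p (drop (k * p) X) = take p X"
  proof (rule nth_equalityI)
    show "length (take p (drop (k * p) X)) = length (take p X)" using Suc.prems by simp
    fix i assume "i < length (take p (drop (k * p) X))"
    then have i: "i < p" "k * p + i < length X" by auto
    have "X ! i = X ! (i + k * p)" using pd_mult[OF assms(1), of i k] i Suc.prems by simp
    then show "take p (drop (k * p) X) ! i = take p X ! i" using i by (simp add: add.commute)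
  qed
  moreover have "replicate (Suc k) (take p X) = replicate k (take p X) @ [take p X]"
    by (simp add: replicate_append_same)
  ultimately show ?case using Suc by simp
qed

lemma shift_period:
  assumes lp: "lper S p" and xy: "x < y" "y < p" "y + p \<le> length S"
    and eq: "take p (drop x S) = take p (drop y S)"
  shows "lper S (y - x)"
  unfolding pd_def
proof (intro allI impI)
  fix i assume i: "0 \<le> i" "i + (y - x) < length S"
  define u where "u = (i + p - x) mod p"
  have p0: "0 < p" using xy by simp
  have u: "u < p" using p0 u_def by simp
  have "(x + u) mod p = (x + (i + p - x)) mod p" unfolding u_def by (simp add: mod_add_right_eq)
  also have "x + (i + p - x) = i + p" using xy by simp
  finally have m1: "(x + u) mod p = i mod p" by simp
  have "(y + u) mod p = (y + (i + p - x)) mod p" unfolding u_def by (simp add: mod_add_right_eq)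
  also have "y + (i + p - x) = (i + (y - x)) + p" using xy by simp
  finally have m2: "(y + u) mod p = (i + (y - x)) mod p" by simp
  have a1: "S ! i = S ! (x + u)" using pd_cong[OF lp, of i "x + u"] m1 u xy i by simp
  have a2: "S ! (i + (y - x)) = S ! (y + u)" using pd_cong[OF lp, of "i + (y - x)" "y + u"] m2 u xy i by simp
  have "take p (drop x S) ! u = take p (drop y S) ! u" using eq by simp
  then have "S ! (x + u) = S ! (y + u)" using u xy by simp
  then show "S ! i = S ! (i + (y - x))" using a1 a2 by simp
qed

lemma ltail_core:
  fixes S H :: "nat list"
  assumes lp: "lper S p" and p0: "0 < p" and len: "2 * p \<le> length S"
    and minp: "\<And>d. 0 < d \<Longrightarrow> lper S d \<Longrightarrow> p \<le> d"
    and t: "t < p" and H: "H = take p (drop t S)"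
  shows "(THE l. \<exists>H' k H''. S = H' @ concat (replicate k H) @ H''
               \<and> strict_suffix H' H \<and> strict_prefix H'' H \<and> length H'' = l) < p"
proof -
  define r where "r = (length S - t) mod p"
  define k where "k = (length S - t) div p"
  have lenH: "length H = p" using H t len by simp
  have r: "r < p" using p0 r_def by simp
  have kr: "t + k * p + r = length S" using t len unfolding k_def r_def
    by (metis add.assoc add_diff_inverse_nat div_mult_mod_eq le_trans less_imp_le_nat mult_2 le_add1 not_less)
  let ?P = "\<lambda>l. \<exists>H' k H''. S = H' @ concat (replicate k H) @ H''
               \<and> strict_suffix H' H \<and> strict_prefix H'' H \<and> length H'' = l"
  have ex: "?P r"
  proof (intro exI conjI)
    have lpd: "lper (drop t S) p" unfolding pd_def
    proof (intro allI impI)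
      fix x assume "0 \<le> x" "x + p < length (drop t S)"
      then show "drop t S ! x = drop t S ! (x + p)"
        using lp spec[OF lp[unfolded pd_def], of "t + x"] by (simp add: add.assoc)
    qed
    have c: "concat (replicate k H) = take (k * p) (drop t S)"
      unfolding H by (rule concat_rep[OF lpd]) (use kr in simp)
    show "S = take t S @ concat (replicate k H) @ drop (t + k * p) S"
      unfolding c by (metis append_take_drop_id drop_drop add.commute)
    have e1: "take t S = drop (p - t) H"
    proof (rule nth_equalityI)
      show "length (take t S) = length (drop (p - t) H)" using lenH t len by simp
      fix i assume "i < length (take t S)"
      then have i: "i < t" by simp
      have "S ! i = S ! (i + p)" using lp i t len unfolding pd_def by auto
      then show "take t S ! i = drop (p - t) H ! i" using i t len H by (simp add: add.commute)
    qed
    show "strict_suffix (take t S) H" unfolding e1 strict_suffix_def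
      using t lenH suffix_drop[of "p - t" H] by (metis diff_diff_cancel diff_less length_drop less_imp_le_nat p0 t zero_less_diff neq0_conv diff_zero)
    have e2: "drop (t + k * p) S = take r H"
    proof (rule nth_equalityI)
      show "length (drop (t + k * p) S) = length (take r H)" using lenH r kr by simp
      fix i assume "i < length (drop (t + k * p) S)"
      then have i: "i < r" using kr by simp
      have "S ! (t + i) = S ! (t + i + k * p)" using pd_mult[OF lp, of "t + i" k] i kr by simp
      moreover have "drop (t + k * p) S ! i = S ! (t + k * p + i)" using i kr by simp
      moreover have "take r H ! i = S ! (t + i)" using i r H t len by simp
      moreover have "t + k * p + i = t + i + k * p" by simp
      ultimately show "drop (t + k * p) S ! i = take r H ! i" by metis
    qed
    show "strict_prefix (drop (t + k * p) S) H" unfolding e2 strict_prefix_def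
      using r lenH take_is_prefix[of r H] by (metis length_take min.absorb4 less_irrefl)
    show "length (drop (t + k * p) S) = r" using kr by simp
  qed
  have uniq: "l = r" if Pl: "?P l" for l
  proof -
    obtain A k' B where d: "S = A @ concat (replicate k' H) @ B" "strict_suffix A H"
      "strict_prefix B H" "length B = l" using Pl by blast
    have la: "length A < p" using d(2) lenH unfolding strict_suffix_def suffix_def by auto
    have lb: "length B < p" using d(3) lenH prefix_length_less by blast
    have lS: "length S = length A + k' * p + length B"
      using d(1) lenH by (simp add: length_concat sum_list_replicate)
    have "k' \<noteq> 0" proof
      assume "k' = 0" then show False using lS la lb len by simp
    qed
    then obtain k2 where k2: "k' = Suc k2" by (cases k') auto
    have blk: "take p (drop (length A) S) = H" using d(1) k2 lenH by simp
    have blt: "take p (drop t S) = H" using H by simp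
    have at: "length A = t"
    proof (rule ccontr)
      assume ne: "length A \<noteq> t"
      show False
      proof (cases "length A < t")
        case True
        have "lper S (t - length A)"
          by (rule shift_period[OF lp True t]) (use len t blk blt in auto)
        then show ?thesis using minp[of "t - length A"] True t by simp
      next
        case False
        then have lt: "t < length A" using ne by simp
        have "lper S (length A - t)"
          by (rule shift_period[OF lp lt la]) (use len la blk blt in auto)
        then show ?thesis using minp[of "length A - t"] lt la by simp
      qed
    qed
    have "l = (length S - t) mod p"
    proof -
      have "length S - t = l + k' * p" using lS at d(4) by simp
      then show ?thesis using lb d(4) by simp
    qed
    then show ?thesis unfolding r_def .
  qed
  have "(THE l. ?P l) = r" by (rule the_equality[where P="?P", OF ex uniq])
  then show ?thesis using r by simp
qed

lemma lper_take: "lper S d \<Longrightarrow> lper (take w S) d"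
  unfolding pd_def by auto

lemma win_eq:
  assumes "1 \<le> i" "1 \<le> \<tau>"
  shows "sub T i (i + 3*\<tau> - 1) = take ((i + 3*\<tau> - 2) - (i - 1)) (drop (i - 1) T)"
  unfolding sub_def using assms by (simp add: numeral_eq_Suc)

lemma win_per:
  assumes "i \<in> RR T \<tau>" "1 \<le> \<tau>"
  shows "pd T (i - 1) (i + 3*\<tau> - 2) (per (sub T i (i + 3*\<tau> - 1)))"
    "0 < per (sub T i (i + 3*\<tau> - 1))" "3 * per (sub T i (i + 3*\<tau> - 1)) \<le> \<tau>"
proof -
  have i: "1 \<le> i" "i + 3*\<tau> \<le> length T + 2" "3 * per (sub T i (i + 3*\<tau> - 1)) \<le> \<tau>"
    using assms(1) by (auto simp: RR_def)
  show "pd T (i - 1) (i + 3*\<tau> - 2) (per (sub T i (i + 3*\<tau> - 1)))"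
    using per_props[of "sub T i (i + 3*\<tau> - 1)"] lper_sub[of "i + 3*\<tau> - 2" T "i - 1"]
      win_eq[OF i(1) assms(2), of T] i assms(2) by auto
  show "0 < per (sub T i (i + 3*\<tau> - 1))" using per_props by blast
  show "3 * per (sub T i (i + 3*\<tau> - 1)) \<le> \<tau>" by (rule i(3))
qed

lemma win_min:
  assumes "1 \<le> i" "i + 3*\<tau> \<le> length T + 2" "1 \<le> \<tau>" "0 < q" "pd T (i - 1) (i + 3*\<tau> - 2) q"
  shows "per (sub T i (i + 3*\<tau> - 1)) \<le> q"
  using per_min[OF assms(4)] lper_sub[of "i + 3*\<tau> - 2" T "i - 1" q] win_eq[OF assms(1) assms(3), of T]
    assms by auto

definition eR :: "nat list \<Rightarrow> nat \<Rightarrow> nat \<Rightarrow> nat" where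
  "eR T \<tau> j = (LEAST j'. j \<le> j' \<and> j' \<notin> RR T \<tau>)"

lemma eR_props:
  shows "j \<le> eR T \<tau> j" "eR T \<tau> j \<notin> RR T \<tau>" "\<And>i. j \<le> i \<Longrightarrow> i < eR T \<tau> j \<Longrightarrow> i \<in> RR T \<tau>"
proof -
  have w: "j \<le> j + length T + 3 \<and> j + length T + 3 \<notin> RR T \<tau>" by (auto simp: RR_def)
  have "j \<le> eR T \<tau> j \<and> eR T \<tau> j \<notin> RR T \<tau>" unfolding eR_def by (rule LeastI[where P="\<lambda>j'. j \<le> j' \<and> j' \<notin> RR T \<tau>", OF w])
  then show "j \<le> eR T \<tau> j" "eR T \<tau> j \<notin> RR T \<tau>" by auto
  fix i assume "j \<le> i" "i < eR T \<tau> j"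
  then show "i \<in> RR T \<tau>" unfolding eR_def using not_less_Least by blast
qed

lemma rend_eq: "rend T \<tau> j = eR T \<tau> j + 3 * \<tau> - 2"
  by (simp add: rend_def eR_def)

lemma run_pd:
  assumes j: "j \<in> RR T \<tau>" and tau: "1 \<le> \<tau>"
  shows "j < eR T \<tau> j" "pd T (j - 1) (eR T \<tau> j + 3*\<tau> - 3) (per (sub T j (j + 3*\<tau> - 1)))"
proof -
  let ?e = "eR T \<tau> j"
  let ?p = "per (sub T j (j + 3*\<tau> - 1))"
  show je: "j < ?e" using eR_props[where j=j and T=T and \<tau>=\<tau>] j by (metis le_neq_implies_less)
  have p3: "3 * ?p \<le> \<tau>" using win_per[OF j tau] by simp
  have j1: "1 \<le> j" using j by (simp add: RR_def)
  have ind: "j + m < ?e \<longrightarrow> pd T (j - 1) (j + m + 3*\<tau> - 2) ?p" for m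
  proof (induction m)
    case 0 then show ?case using win_per(1)[OF j tau] by simp
  next
    case (Suc m)
    show ?case
    proof
      assume lt: "j + Suc m < ?e"
      then have IH: "pd T (j - 1) (j + m + 3*\<tau> - 2) ?p" using Suc by simp
      have iR: "j + m + 1 \<in> RR T \<tau>" using eR_props(3)[where j=j and T=T and \<tau>=\<tau> and i="j + m + 1"] lt by simp
      let ?q = "per (sub T (j + m + 1) (j + m + 1 + 3*\<tau> - 1))"
      have q: "pd T (j + m) (j + m + 1 + 3*\<tau> - 2) ?q" "0 < ?q" "3 * ?q \<le> \<tau>"
        using win_per[OF iR tau] by auto
      have eq: "j + m + 1 + 3*\<tau> - 2 = (j + m + 3*\<tau> - 2) + 1" using tau by simp
      have "pd T (j - 1) ((j + m + 3*\<tau> - 2) + 1) ?p"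
        by (rule pd_ext_right[OF IH, of "j + m" ?q]) (use q eq p3 tau j1 in auto)
      moreover have "j + Suc m + 3*\<tau> - 2 = (j + m + 3*\<tau> - 2) + 1" using tau by simp
      ultimately show "pd T (j - 1) (j + Suc m + 3*\<tau> - 2) ?p" by metis
    qed
  qed
  have "j + (?e - 1 - j) + 3*\<tau> - 2 = ?e + 3*\<tau> - 3" using je tau by simp
  then show "pd T (j - 1) (?e + 3*\<tau> - 3) ?p" using ind[of "?e - 1 - j"] je by simp
qed

lemma take_drop_take: "t + p \<le> m \<Longrightarrow> take p (drop t (take m X)) = take p (drop t X)"
  by (simp add: drop_take take_take min_def)

lemma ltail_lt:
  assumes j: "j \<in> RR T \<tau>" and tau: "1 \<le> \<tau>"
  shows "Ltail T \<tau> j < per (sub T j (j + 3*\<tau> - 1))"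
proof -
  let ?e = "eR T \<tau> j"
  let ?p = "per (sub T j (j + 3*\<tau> - 1))"
  define S where "S = sub T j (rend T \<tau> j)"
  have je: "j < ?e" and run: "pd T (j - 1) (?e + 3*\<tau> - 3) ?p" using run_pd[OF j tau] by auto
  have j1: "1 \<le> j" using j by (simp add: RR_def)
  have eR1: "?e - 1 \<in> RR T \<tau>"
    using eR_props(3)[where j=j and T=T and \<tau>=\<tau> and i="?e - 1"] je by simp
  have "?e - 1 + 3*\<tau> \<le> length T + 2" using eR1 unfolding RR_def mem_Collect_eq by blast
  then have bnd: "?e + 3*\<tau> - 3 \<le> length T" using tau je by linarith
  have Sdef: "S = take ((?e + 3*\<tau> - 3) - (j - 1)) (drop (j - 1) T)"
    unfolding S_def sub_def rend_eq using je j1 tau by simp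
  have lenS: "length S = ?e + 3*\<tau> - 2 - j" using Sdef bnd je j1 tau by simp
  have lp: "lper S ?p" using lper_sub[of "?e + 3*\<tau> - 3" T "j - 1" ?p] run Sdef bnd je tau by simp
  have wS: "sub T j (j + 3*\<tau> - 1) = take (3*\<tau> - 1) S"
    unfolding Sdef win_eq[OF j1 tau] using je j1 tau by (simp add: min_def)
  have p0: "0 < ?p" and p3: "3 * ?p \<le> \<tau>" using win_per[OF j tau] by auto
  have len: "2 * ?p \<le> length S" using lenS p3 je tau by simp
  have minp: "?p \<le> d" if "0 < d" "lper S d" for d
    using per_min[OF that(1) lper_take[OF that(2), of "3*\<tau> - 1"]] wS by simp
  have fin: "{sub T (j + t) (j + t + ?p) | t. t < ?p} = (\<lambda>t. sub T (j + t) (j + t + ?p)) ` {..<?p}"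
    by auto
  have "Lroot T \<tau> j \<in> {sub T (j + t) (j + t + ?p) | t. t < ?p}"
    unfolding Lroot_def Let_def fin by (rule Min_in) (use p0 in auto)
  then obtain t where t: "t < ?p" and Lr: "Lroot T \<tau> j = sub T (j + t) (j + t + ?p)" by blast
  have tp: "t + ?p \<le> length S" using t len by simp
  have H: "Lroot T \<tau> j = take ?p (drop t S)"
  proof -
    have "take ?p (drop t S) = take ?p (drop (j - 1 + t) T)"
    proof -
      have "t + ?p \<le> (?e + 3*\<tau> - 3) - (j - 1)" using tp lenS j1 je tau by simp
      then show ?thesis unfolding Sdef by (simp add: take_drop_take add.commute)
    qed
    moreover have "sub T (j + t) (j + t + ?p) = take ?p (drop (j - 1 + t) T)"
      unfolding sub_def using j1 by simp
    ultimately show ?thesis using Lr by simp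
  qed
  show ?thesis unfolding Ltail_def Let_def S_def[symmetric]
    by (rule ltail_core[OF lp p0 len minp t H])
qed

lemma main_lt:
  assumes tau: "1 \<le> \<tau>" and jR: "j \<in> RR' T \<tau>" and jR': "j' \<in> RR' T \<tau>" and lt: "j < j'"
  shows "efull T \<tau> j \<noteq> efull T \<tau> j'"
proof
  assume E: "efull T \<tau> j = efull T \<tau> j'"
  let ?e = "eR T \<tau> j"
  let ?e' = "eR T \<tau> j'"
  let ?p' = "per (sub T j' (j' + 3*\<tau> - 1))"
  let ?p0 = "per (sub T (?e - 1) (?e - 1 + 3*\<tau> - 1))"
  have j: "j \<in> RR T \<tau>" using jR by (simp add: RR'_def)
  have j': "j' \<in> RR T \<tau>" "j' - 1 \<notin> RR T \<tau>" using jR' by (auto simp: RR'_def)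
  have je: "j < ?e" using run_pd(1)[OF j tau] .
  have j'e: "j' < ?e'" using run_pd(1)[OF j'(1) tau] .
  have ej': "?e \<le> j' - 1"
  proof (rule ccontr)
    assume "\<not> ?e \<le> j' - 1"
    then have "j' - 1 \<in> RR T \<tau>" using eR_props(3)[where j=j and T=T and \<tau>=\<tau> and i="j' - 1"] lt by simp
    then show False using j'(2) by simp
  qed
  have L': "Ltail T \<tau> j' < ?p'" using ltail_lt[OF j'(1) tau] .
  have ef1: "efull T \<tau> j \<le> ?e + 3*\<tau> - 2" unfolding efull_def rend_eq by simp
  have ef2: "efull T \<tau> j' + ?p' > ?e' + 3*\<tau> - 2" unfolding efull_def rend_eq using L' j'e tau by simp
  have key1: "j' + 3*\<tau> \<le> ?e + 3*\<tau> - 2 + ?p'" using ef1 ef2 E j'e tau by linarith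
  have e1R: "?e - 1 \<in> RR T \<tau>" using eR_props(3)[where j=j and T=T and \<tau>=\<tau> and i="?e - 1"] je by simp
  have w0: "pd T (?e - 1 - 1) (?e - 1 + 3*\<tau> - 2) ?p0" "3 * ?p0 \<le> \<tau>" "0 < ?p0"
    using win_per[OF e1R tau] by auto
  have w': "pd T (j' - 1) (j' + 3*\<tau> - 2) ?p'" "3 * ?p' \<le> \<tau>" "0 < ?p'"
    using win_per[OF j'(1) tau] by auto
  have A: "pd T (?e - 1) (?e + 3*\<tau> - 3) ?p0"
    by (rule pd_mono[OF w0(1)]) (use je tau in auto)
  have B: "pd T (j' - 1) ((?e + 3*\<tau> - 3) + 1) ?p'"
    by (rule pd_mono[OF w'(1)]) (use je tau ej' in auto)
  have C: "pd T (?e - 1) ((?e + 3*\<tau> - 3) + 1) ?p0"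
  proof -
    have c1: "?e - 1 \<le> j' - 1" using ej' by arith
    have c2: "j' - 1 + ?p0 + ?p' \<le> ?e + 3*\<tau> - 3" using je tau ej' key1 w0(2) w'(2) by arith
    show ?thesis by (rule pd_ext_right[OF A B c1 c2 w'(3)])
  qed
  have eb: "1 \<le> ?e" "?e + 3*\<tau> \<le> length T + 2"
    using je ej' j'(1) by (auto simp: RR_def)
  have "per (sub T ?e (?e + 3*\<tau> - 1)) \<le> ?p0"
  proof (rule win_min[OF eb tau w0(3)])
    have "?e + 3*\<tau> - 2 = (?e + 3*\<tau> - 3) + 1" using tau je by arith
    then show "pd T (?e - 1) (?e + 3*\<tau> - 2) ?p0" using C by metis
  qed
  then have "?e \<in> RR T \<tau>" using eb w0(2) unfolding RR_def by simp
  then show False using eR_props(2)[where j=j and T=T and \<tau>=\<tau>] by simp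
qed

theorem lemma5p14:
  fixes T :: "nat list" and \<sigma> :: nat and \<mu> :: real and \<tau> :: nat and j j' :: nat
  assumes "\<forall>c \<in> set T. c < \<sigma>"
    and "2 \<le> \<sigma>"
    and "real \<sigma> < real (length T) powr (1/7)"
    and "0 < \<mu>" and "\<mu> < 1/6"
    and "int \<tau> = \<lfloor>\<mu> * log (real \<sigma>) (real (length T))\<rfloor>"
    and "1 \<le> \<tau>"
    and "j \<in> RR' T \<tau>" and "j' \<in> RR' T \<tau>"
    and "j \<noteq> j'"
  shows "efull T \<tau> j \<noteq> efull T \<tau> j'"
proof (cases "j < j'")
  case True then show ?thesis using main_lt assms by blast
next
  case False
  then have "j' < j" using assms(10) by simp
  then show ?thesis using main_lt[of \<tau> j' T j] assms by metis
qed

end
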